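(* Let $\pi_1(K^2)=\langle a,b\mid aba^{-1}=b^{-1}\rangle$ and let $\rho\colon\pi_1(K^2)\to\mathrm{Isom}(\mathbb{H}^3)$ preserve the orientation type with $\rho(b)\neq\mathrm{Id}$. Then: if $\rho$ is parabolic, $I_\gamma(\rho)=0$ for all $\gamma\in\langle a^2,b\rangle$; if $\rho$ is of type I, $I_{a^2}(\rho)\ge0$ and $I_b(\rho)<0$; if $\rho$ is of type II, $I_{a^2}(\rho)\le0$ and $I_b(\rho)>0$.
   Context: $\rho$ preserves the orientation type if $\rho(\gamma)$ is orientation-preserving iff $\gamma$ is an orientation-preserving loop of $K^2$ (so $\rho(a)$ reverses and $\rho(b)$ preserves orientation). Such $\rho$ with $\rho(b)\ne\mathrm{Id}$ is conjugate, as transformations $A=\rho(a)$, $B=\rho(b)$ of $\mathbb{C}\cup\{\infty\}$, to one of: parabolic: $A(z)=\overline z+1$ or $A(z)=\overline z$, with $B(z)=z+\tau i$, $\tau>0$; type I: $A(z)=e^{l}\overline z$, $B(z)=e^{\alpha i}z$, $l\ge0$, $\alpha\in(0,\pi]$; type II: $A(z)=e^{\alpha i}/\overline z$, $B(z)=e^{l}z$, $l>0$, $\alpha\in[0,\pi]$. For $\gamma$ in the orientation subgroup $\langle a^2,b\rangle$, $I_\gamma(\rho)=(\mathrm{trace}_{\mathrm{PSL}(2,\mathbb{C})}\rho(\gamma))^2-4$. *)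

theory Defs
  imports Complex_Main
begin

text \<open>
  Isometries of hyperbolic 3-space, viewed through their action on the Riemann sphere
  C u {infinity}.  A 2x2 complex matrix is a quadruple (a,b,c,d).  An isometry is a pair
  (M, r) with det M = 1, where r = False means the orientation-preserving map
  z -> (a z + b)/(c z + d), and r = True means the orientation-reversing map
  z -> (a conj(z) + b)/(c conj(z) + d).  Two pairs represent the same isometry iff
  the flags agree and the matrices agree up to sign (PSL(2,C)).
\<close>

type_synonym cmat = "complex \<times> complex \<times> complex \<times> complex"
type_synonym isom = "cmat \<times> bool"

fun mmul :: "cmat \<Rightarrow> cmat \<Rightarrow> cmat" where
  "mmul (a,b,c,d) (e,f,g,h) = (a*e+b*g, a*f+b*h, c*e+d*g, c*f+d*h)"

fun mdet :: "cmat \<Rightarrow> complex" where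
  "mdet (a,b,c,d) = a*d - b*c"

fun mtrace :: "cmat \<Rightarrow> complex" where
  "mtrace (a,b,c,d) = a + d"

fun mcnj :: "cmat \<Rightarrow> cmat" where
  "mcnj (a,b,c,d) = (cnj a, cnj b, cnj c, cnj d)"

fun madj :: "cmat \<Rightarrow> cmat" where
  "madj (a,b,c,d) = (d, -b, -c, a)"

fun mneg :: "cmat \<Rightarrow> cmat" where
  "mneg (a,b,c,d) = (-a, -b, -c, -d)"

definition isom_valid :: "isom \<Rightarrow> bool" where
  "isom_valid A \<longleftrightarrow> mdet (fst A) = 1"

definition isom_id :: isom where
  "isom_id = ((1,0,0,1), False)"

text \<open>Composition A \<circ> B (first B, then A).  Uses conj(N(w)) = conj(N)(conj w).\<close>
fun isom_comp :: "isom \<Rightarrow> isom \<Rightarrow> isom" where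
  "isom_comp (M, r) (N, s) = (mmul M (if r then mcnj N else N), r \<noteq> s)"

fun isom_inv :: "isom \<Rightarrow> isom" where
  "isom_inv (M, r) = ((if r then mcnj (madj M) else madj M), r)"

fun isom_eq :: "isom \<Rightarrow> isom \<Rightarrow> bool" where
  "isom_eq (M, r) (N, s) \<longleftrightarrow> r = s \<and> (M = N \<or> M = mneg N)"

definition orientation_preserving :: "isom \<Rightarrow> bool" where
  "orientation_preserving A \<longleftrightarrow> \<not> snd A"

text \<open>\<open>\<rho>\<close> is given by \<open>A = \<rho>(a)\<close>, \<open>B = \<rho>(b)\<close>; it is a representation of
  pi_1(K^2) = < a,b | a b a^-1 = b^-1 > iff the relation holds.\<close>
definition is_rep :: "isom \<Rightarrow> isom \<Rightarrow> bool" where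
  "is_rep A B \<longleftrightarrow> isom_valid A \<and> isom_valid B \<and>
     isom_eq (isom_comp (isom_comp A B) (isom_inv A)) (isom_inv B)"

definition preserves_orientation_type :: "isom \<Rightarrow> isom \<Rightarrow> bool" where
  "preserves_orientation_type A B \<longleftrightarrow> \<not> orientation_preserving A \<and> orientation_preserving B"

definition conj_pair :: "isom \<Rightarrow> isom \<Rightarrow> isom \<Rightarrow> isom \<Rightarrow> bool" where
  "conj_pair A B A0 B0 \<longleftrightarrow> (\<exists>G. isom_valid G \<and>
      isom_eq A (isom_comp (isom_comp G A0) (isom_inv G)) \<and>
      isom_eq B (isom_comp (isom_comp G B0) (isom_inv G)))"

text \<open>Normal forms (matrices of determinant one):
  z -> conj z + 1 ; z -> conj z ; z -> z + \<tau> i ;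
  z -> e^l conj z ; z -> e^(alpha i) z ; z -> e^(alpha i) / conj z ; z -> e^l z.\<close>
definition nf_conj_plus1 :: isom where "nf_conj_plus1 = ((1,1,0,1), True)"
definition nf_conj :: isom where "nf_conj = ((1,0,0,1), True)"
definition nf_transl :: "real \<Rightarrow> isom" where
  "nf_transl \<tau> = ((1, \<i> * complex_of_real \<tau>, 0, 1), False)"
definition nf_dil_conj :: "real \<Rightarrow> isom" where
  "nf_dil_conj l = ((complex_of_real (exp (l/2)), 0, 0, complex_of_real (exp (-l/2))), True)"
definition nf_rot :: "real \<Rightarrow> isom" where
  "nf_rot \<alpha> = ((cis (\<alpha>/2), 0, 0, cis (-\<alpha>/2)), False)"
definition nf_inv_conj :: "real \<Rightarrow> isom" where
  "nf_inv_conj \<alpha> = ((0, \<i> * cis (\<alpha>/2), \<i> * cis (-\<alpha>/2), 0), True)"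
definition nf_dil :: "real \<Rightarrow> isom" where
  "nf_dil l = ((complex_of_real (exp (l/2)), 0, 0, complex_of_real (exp (-l/2))), False)"

definition rep_parabolic :: "isom \<Rightarrow> isom \<Rightarrow> bool" where
  "rep_parabolic A B \<longleftrightarrow> (\<exists>\<tau>>0. conj_pair A B nf_conj_plus1 (nf_transl \<tau>)
                                  \<or> conj_pair A B nf_conj (nf_transl \<tau>))"

definition rep_typeI :: "isom \<Rightarrow> isom \<Rightarrow> bool" where
  "rep_typeI A B \<longleftrightarrow> (\<exists>l \<alpha>. l \<ge> 0 \<and> 0 < \<alpha> \<and> \<alpha> \<le> pi \<and> conj_pair A B (nf_dil_conj l) (nf_rot \<alpha>))"

definition rep_typeII :: "isom \<Rightarrow> isom \<Rightarrow> bool" where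
  "rep_typeII A B \<longleftrightarrow> (\<exists>l \<alpha>. l > 0 \<and> 0 \<le> \<alpha> \<and> \<alpha> \<le> pi \<and> conj_pair A B (nf_inv_conj \<alpha>) (nf_dil l))"

datatype gen = Asq | AsqInv | Bgen | BgenInv

fun rho_gen :: "isom \<Rightarrow> isom \<Rightarrow> gen \<Rightarrow> isom" where
  "rho_gen A B Asq = isom_comp A A"
| "rho_gen A B AsqInv = isom_inv (isom_comp A A)"
| "rho_gen A B Bgen = B"
| "rho_gen A B BgenInv = isom_inv B"

fun rho_word :: "isom \<Rightarrow> isom \<Rightarrow> gen list \<Rightarrow> isom" where
  "rho_word A B [] = isom_id"
| "rho_word A B (g # w) = isom_comp (rho_gen A B g) (rho_word A B w)"

text \<open>I_gamma(rho) = (trace rho(gamma))^2 - 4 (well defined on PSL(2,C)).\<close>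
definition I_word :: "isom \<Rightarrow> isom \<Rightarrow> gen list \<Rightarrow> complex" where
  "I_word A B w = (mtrace (fst (rho_word A B w)))\<^sup>2 - 4"

end

theory Submission
  imports Defs
begin

lemma mmul_assoc: "mmul (mmul M N) P = mmul M (mmul N P)"
  by (cases M rule: prod_cases4; cases N rule: prod_cases4; cases P rule: prod_cases4)
     (simp add: algebra_simps)

lemma mcnj_mmul: "mcnj (mmul M N) = mmul (mcnj M) (mcnj N)"
  by (cases M rule: prod_cases4; cases N rule: prod_cases4) simp

lemma mcnj_mcnj[simp]: "mcnj (mcnj M) = M"
  by (cases M rule: prod_cases4) simp

lemma madj_mmul: "madj (mmul M N) = mmul (madj N) (madj M)"
  by (cases M rule: prod_cases4; cases N rule: prod_cases4) (simp add: algebra_simps)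

lemma madj_mcnj: "madj (mcnj M) = mcnj (madj M)"
  by (cases M rule: prod_cases4) simp

lemma mdet_mcnj: "mdet (mcnj M) = cnj (mdet M)"
  by (cases M rule: prod_cases4) simp

lemma mmul_id_left[simp]: "mmul (1,0,0,1) M = M"
  by (cases M rule: prod_cases4) simp

lemma mmul_id_right[simp]: "mmul M (1,0,0,1) = M"
  by (cases M rule: prod_cases4) simp

lemma mmul_adj_right: "mdet M = 1 \<Longrightarrow> mmul M (madj M) = (1,0,0,1)"
  by (cases M rule: prod_cases4) (simp add: algebra_simps)

lemma mmul_adj_left: "mdet M = 1 \<Longrightarrow> mmul (madj M) M = (1,0,0,1)"
  by (cases M rule: prod_cases4) (simp add: algebra_simps)

lemma mneg_mmul_l: "mmul (mneg M) N = mneg (mmul M N)"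
  by (cases M rule: prod_cases4; cases N rule: prod_cases4) (simp add: algebra_simps)

lemma mneg_mmul_r: "mmul M (mneg N) = mneg (mmul M N)"
  by (cases M rule: prod_cases4; cases N rule: prod_cases4) (simp add: algebra_simps)

lemma mneg_mcnj: "mcnj (mneg M) = mneg (mcnj M)"
  by (cases M rule: prod_cases4) simp

lemma mneg_madj: "madj (mneg M) = mneg (madj M)"
  by (cases M rule: prod_cases4) simp

lemma mneg_mneg[simp]: "mneg (mneg M) = M"
  by (cases M rule: prod_cases4) simp

lemma comp_assoc: "isom_comp (isom_comp X Y) Z = isom_comp X (isom_comp Y Z)"
  by (cases X; cases Y; cases Z) (auto simp: mmul_assoc mcnj_mmul)

lemma comp_id_left[simp]: "isom_comp isom_id X = X"
  by (cases X) (simp add: isom_id_def)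

lemma comp_id_right[simp]: "isom_comp X isom_id = X"
  by (cases X) (simp add: isom_id_def)

lemma comp_inv_right: "isom_valid G \<Longrightarrow> isom_comp G (isom_inv G) = isom_id"
  by (cases G) (auto simp: isom_valid_def isom_id_def mmul_adj_right)

lemma comp_inv_left: "isom_valid G \<Longrightarrow> isom_comp (isom_inv G) G = isom_id"
proof (cases G)
  case (Pair M r)
  assume "isom_valid G"
  then have d: "mdet M = 1" using Pair by (simp add: isom_valid_def)
  show ?thesis
  proof (cases r)
    case True
    have "mmul (mcnj (madj M)) (mcnj M) = mcnj (mmul (madj M) M)" by (simp add: mcnj_mmul)
    also have "\<dots> = (1,0,0,1)" using d by (simp add: mmul_adj_left)
    finally show ?thesis using Pair True by (simp add: isom_id_def)
  next
    case False
    then show ?thesis using Pair d by (simp add: isom_id_def mmul_adj_left)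
  qed
qed

lemma inv_comp: "isom_inv (isom_comp X Y) = isom_comp (isom_inv Y) (isom_inv X)"
  by (cases X; cases Y) (auto simp: madj_mmul mcnj_mmul madj_mcnj)

lemma eq_comp: "isom_eq X X' \<Longrightarrow> isom_eq Y Y' \<Longrightarrow> isom_eq (isom_comp X Y) (isom_comp X' Y')"
  by (cases X; cases X'; cases Y; cases Y')
     (auto simp: mneg_mmul_l mneg_mmul_r mneg_mcnj)

lemma eq_inv: "isom_eq X X' \<Longrightarrow> isom_eq (isom_inv X) (isom_inv X')"
  by (cases X; cases X') (auto simp: mneg_mcnj mneg_madj)

lemma eq_refl: "isom_eq X X"
  by (cases X) auto

definition cj :: "isom \<Rightarrow> isom \<Rightarrow> isom" where
  "cj G X = isom_comp (isom_comp G X) (isom_inv G)"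

lemma cj_comp: "isom_valid G \<Longrightarrow> isom_comp (cj G X) (cj G Y) = cj G (isom_comp X Y)"
proof -
  assume v: "isom_valid G"
  have "isom_comp (cj G X) (cj G Y)
      = isom_comp (isom_comp G X) (isom_comp (isom_comp (isom_inv G) G) (isom_comp Y (isom_inv G)))"
    unfolding cj_def by (simp add: comp_assoc)
  also have "\<dots> = cj G (isom_comp X Y)"
    using v by (simp add: comp_inv_left cj_def comp_assoc)
  finally show ?thesis .
qed

lemma inv_inv_valid: "isom_inv (isom_inv G) = G"
proof (cases G)
  case (Pair M r)
  have "madj (madj M) = M" by (cases M rule: prod_cases4) simp
  then show ?thesis using Pair by (simp add: madj_mcnj)
qed

lemma cj_inv: "isom_inv (cj G X) = cj G (isom_inv X)"
  unfolding cj_def by (simp add: inv_comp comp_assoc inv_inv_valid)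

lemma cj_id: "isom_valid G \<Longrightarrow> cj G isom_id = isom_id"
  unfolding cj_def by (simp add: comp_inv_right)

definition orp :: "isom \<Rightarrow> bool" where "orp X \<longleftrightarrow> \<not> snd X"

lemma word_cj:
  assumes v: "isom_valid G"
  shows "rho_word (cj G A0) (cj G B0) w = cj G (rho_word A0 B0 w)"
proof (induction w)
  case Nil then show ?case using v by (simp add: cj_id)
next
  case (Cons g w)
  have "rho_gen (cj G A0) (cj G B0) g = cj G (rho_gen A0 B0 g)"
    by (cases g) (simp_all add: cj_comp[OF v] cj_inv)
  then show ?case using Cons by (simp add: cj_comp[OF v])
qed

lemma word_eq:
  assumes "isom_eq A A1" "isom_eq B B1"
  shows "isom_eq (rho_word A B w) (rho_word A1 B1 w)"
proof (induction w)
  case Nil then show ?case by (simp add: eq_refl)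
next
  case (Cons g w)
  have "isom_eq (rho_gen A B g) (rho_gen A1 B1 g)"
    using assms by (cases g) (simp_all add: eq_comp eq_inv)
  then show ?case using Cons by (simp add: eq_comp)
qed

lemma tr_id: "((a::complex)*x + b*z)*d - (a*y+b*w)*c + ((c*y + d*w)*a - (c*x+d*z)*b) = (a*d-b*c)*(x+w)"
  by (simp add: algebra_simps)

lemma trace_cj:
  assumes "isom_valid G" "\<not> snd X"
  shows "mtrace (fst (cj G X)) = (if snd G then cnj (mtrace (fst X)) else mtrace (fst X))"
proof (cases G; cases X)
  fix g r M s assume G: "G = (g, r)" and X: "X = (M, s)"
  have d: "mdet g = 1" using assms G by (simp add: isom_valid_def)
  have s: "\<not> s" using assms X by simp
  show ?thesis
    using d s G X
  proof (cases g rule: prod_cases4; cases M rule: prod_cases4)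
    fix a b c d a' b' c' d'
    assume g: "g = (a,b,c,d)" and M: "M = (a',b',c',d')"
    have e: "a*d - b*c = 1" using d g by simp
    have k: "a * d * z - b * c * z = z" for z
      by (metis e left_diff_distrib mult_1)
    show ?thesis using G X s g M e
      apply (cases r)
       apply (simp_all add: cj_def)
       apply (simp_all only: tr_id e mult_1_left)
      done
  qed
qed


lemma words_orp: "\<not> snd B0 \<Longrightarrow> \<not> snd (rho_word A0 B0 w)"
proof (induction w)
  case Nil then show ?case by (simp add: isom_id_def)
next
  case (Cons g w)
  have "\<not> snd (rho_gen A0 B0 g)"
    using Cons.prems by (cases g; cases A0; cases B0) auto
  then show ?case using Cons by (cases "rho_gen A0 B0 g"; cases "rho_word A0 B0 w") auto
qed

lemma eq_trace_sq: "isom_eq X Y \<Longrightarrow> (mtrace (fst X))\<^sup>2 = (mtrace (fst Y))\<^sup>2"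
proof (cases X; cases Y)
  fix M r N s assume X: "X = (M, r)" and Y: "Y = (N, s)" and e: "isom_eq X Y"
  have "mtrace (mneg N) = - mtrace N" by (cases N rule: prod_cases4) simp
  then show ?thesis using X Y e by auto
qed

lemma I_transfer:
  assumes "conj_pair A B A0 B0" "\<not> snd B0"
  shows "\<exists>b. \<forall>w. I_word A B w = (if b then cnj (I_word A0 B0 w) else I_word A0 B0 w)"
proof -
  obtain G where v: "isom_valid G" and eA: "isom_eq A (cj G A0)" and eB: "isom_eq B (cj G B0)"
    using assms(1) unfolding conj_pair_def cj_def by blast
  show ?thesis
  proof (intro exI allI)
    fix w
    have e: "isom_eq (rho_word A B w) (cj G (rho_word A0 B0 w))"
      using word_eq[OF eA eB, of w] word_cj[OF v] by simp
    have t: "mtrace (fst (cj G (rho_word A0 B0 w)))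
        = (if snd G then cnj (mtrace (fst (rho_word A0 B0 w))) else mtrace (fst (rho_word A0 B0 w)))"
      using trace_cj[OF v words_orp[OF assms(2)]] .
    show "I_word A B w = (if snd G then cnj (I_word A0 B0 w) else I_word A0 B0 w)"
      unfolding I_word_def using eq_trace_sq[OF e] t by simp
  qed
qed

lemma unip_words:
  assumes "\<And>g. \<exists>x. rho_gen A0 B0 g = ((1,x,0,1), False)"
  shows "\<exists>x. rho_word A0 B0 w = ((1,x,0,1), False)"
proof (induction w)
  case Nil then show ?case by (simp add: isom_id_def)
next
  case (Cons g w)
  obtain x where "rho_gen A0 B0 g = ((1,x,0,1), False)" using assms by blast
  moreover obtain y where "rho_word A0 B0 w = ((1,y,0,1), False)" using Cons by blast
  ultimately show ?case by simp
qed

lemma parab_zero: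
  assumes "A0 = nf_conj_plus1 \<or> A0 = nf_conj"
  shows "I_word A0 (nf_transl t) w = 0"
proof -
  have "\<exists>x. rho_gen A0 (nf_transl t) g = ((1,x,0,1), False)" for g
    using assms by (cases g) (auto simp: nf_conj_plus1_def nf_conj_def nf_transl_def)
  then obtain x where "rho_word A0 (nf_transl t) w = ((1,x,0,1), False)"
    using unip_words by blast
  then show ?thesis by (simp add: I_word_def)
qed

lemma tr2: "- (\<i> * cis (a / 2) * (\<i> * cnj (cis (- (a / 2))))) -
      \<i> * cis (- (a / 2)) * (\<i> * cnj (cis (a / 2))) = of_real (2 * cos a)"
proof -
  have "- (\<i> * cis (a / 2) * (\<i> * cnj (cis (- (a / 2))))) -
      \<i> * cis (- (a / 2)) * (\<i> * cnj (cis (a / 2))) = cis (a/2) * cis (a/2) + cis (-(a/2)) * cis (-(a/2))"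
    by (simp add: cis_cnj algebra_simps)
  also have "\<dots> = cis a + cis (-a)" by (simp add: cis_mult)
  also have "\<dots> = of_real (2 * cos a)" by (simp add: complex_eq_iff)
  finally show ?thesis .
qed

lemma cis_sum: "cis (a/2) + cis(-a/2) = of_real (2 * cos (a/2))"
  by (simp add: complex_eq_iff)

lemma I_dc: "I_word (nf_dil_conj l) B0 [Asq] = of_real ((exp(l/2)*exp(l/2) + exp(-l/2)*exp(-l/2))^2 - 4)"
  by (simp add: I_word_def nf_dil_conj_def isom_id_def)
lemma I_rot: "I_word A0 (nf_rot a) [Bgen] = of_real ((2 * cos (a/2))^2 - 4)"
proof -
  have "I_word A0 (nf_rot a) [Bgen] = (cis (a/2) + cis(-a/2))^2 - 4"
    by (cases A0) (simp add: I_word_def nf_rot_def isom_id_def)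
  also have "\<dots> = (of_real (2 * cos (a/2)))^2 - 4"
    by (simp only: cis_sum)
  finally show ?thesis by simp
qed
lemma I_ic: "I_word (nf_inv_conj a) B0 [Asq] = of_real ((2*cos a)^2 - 4)"
  by (simp add: I_word_def nf_inv_conj_def isom_id_def tr2)
lemma I_dil: "I_word A0 (nf_dil l) [Bgen] = of_real ((exp(l/2) + exp(-l/2))^2 - 4)"
  by (cases A0) (simp add: I_word_def nf_dil_def isom_id_def)

lemma ineq1: "(exp(l/2)*exp(l/2) + exp(-l/2)*exp(-l/2))^2 - 4 \<ge> (0::real)"
proof -
  define u where "u = exp (l/2)"
  define v where "v = exp (-l/2)"
  have uv: "u * v = 1" unfolding u_def v_def by (simp add: exp_add[symmetric])
  have "(u*u+v*v)^2 - (u*u-v*v)^2 = 4*(u*v)^2" by (simp add: power2_eq_square algebra_simps)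
  then have "(u*u+v*v)^2 - 4 = (u*u-v*v)^2" using uv by simp
  then show ?thesis unfolding u_def v_def by simp
qed

lemma ineq4: "l > 0 \<Longrightarrow> (exp(l/2) + exp(-l/2))^2 - 4 > (0::real)"
proof -
  assume l: "l > 0"
  define u where "u = exp (l/2)"
  define v where "v = exp (-l/2)"
  have uv: "u * v = 1" unfolding u_def v_def by (simp add: exp_add[symmetric])
  have lt: "v < u" unfolding u_def v_def using l by simp
  have "(u+v)^2 - (u-v)^2 = 4*(u*v)" by (simp add: power2_eq_square algebra_simps)
  then have "(u+v)^2 - 4 = (u-v)^2" using uv by simp
  moreover have "(u-v)^2 > 0" using lt by simp
  ultimately show ?thesis unfolding u_def v_def by simp
qed

lemma ineq2: "0 < a \<Longrightarrow> a \<le> pi \<Longrightarrow> (2 * cos (a/2))^2 - 4 < (0::real)"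
proof -
  assume a: "0 < a" "a \<le> pi"
  have "sin (a/2) > 0" using a by (intro sin_gt_zero) auto
  then have "(sin (a/2))^2 > 0" by simp
  moreover have "(sin (a/2))^2 + (cos (a/2))^2 = 1" by simp
  ultimately have "(cos (a/2))^2 < 1" by linarith
  then show ?thesis by (simp add: power_mult_distrib)
qed

lemma ineq3: "(2 * cos a)^2 - 4 \<le> (0::real)"
proof -
  have "(sin a)^2 + (cos a)^2 = 1" by simp
  moreover have "(sin a)^2 \<ge> 0" by simp
  ultimately have "(cos a)^2 \<le> 1" by linarith
  then show ?thesis by (simp add: power_mult_distrib)
qed

theorem lemma4p5:
  fixes A B :: isom
  assumes "is_rep A B"
    and "preserves_orientation_type A B"
    and "\<not> isom_eq B isom_id"
  shows "(rep_parabolic A B \<longrightarrow> (\<forall>w. I_word A B w = 0))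
       \<and> (rep_typeI A B \<longrightarrow> I_word A B [Asq] \<in> \<real> \<and> Re (I_word A B [Asq]) \<ge> 0
                            \<and> I_word A B [Bgen] \<in> \<real> \<and> Re (I_word A B [Bgen]) < 0)
       \<and> (rep_typeII A B \<longrightarrow> I_word A B [Asq] \<in> \<real> \<and> Re (I_word A B [Asq]) \<le> 0
                            \<and> I_word A B [Bgen] \<in> \<real> \<and> Re (I_word A B [Bgen]) > 0)"
proof (intro conjI impI)
  assume "rep_parabolic A B"
  then obtain t A0 where c: "conj_pair A B A0 (nf_transl t)" and A0: "A0 = nf_conj_plus1 \<or> A0 = nf_conj"
    unfolding rep_parabolic_def by blast
  obtain b where "\<forall>w. I_word A B w = (if b then cnj (I_word A0 (nf_transl t) w) else I_word A0 (nf_transl t) w)"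
    using I_transfer[OF c] by (auto simp: nf_transl_def)
  then show "\<forall>w. I_word A B w = 0" using parab_zero[OF A0] by simp
next
  assume "rep_typeI A B"
  then obtain l a where la: "0 < a" "a \<le> pi" and c: "conj_pair A B (nf_dil_conj l) (nf_rot a)"
    unfolding rep_typeI_def by blast
  obtain b where T: "\<forall>w. I_word A B w = (if b then cnj (I_word (nf_dil_conj l) (nf_rot a) w) else I_word (nf_dil_conj l) (nf_rot a) w)"
    using I_transfer[OF c] by (auto simp: nf_rot_def)
  have 1: "I_word A B [Asq] = of_real ((exp(l/2)*exp(l/2) + exp(-l/2)*exp(-l/2))^2 - 4)"
    using T I_dc by simp
  have 2: "I_word A B [Bgen] = of_real ((2 * cos (a/2))^2 - 4)"
    using T I_rot by simp
  show "I_word A B [Asq] \<in> \<real>" using 1 by simp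
  show "Re (I_word A B [Asq]) \<ge> 0" using 1 ineq1 by simp
  show "I_word A B [Bgen] \<in> \<real>" using 2 by simp
  show "Re (I_word A B [Bgen]) < 0" using 2 ineq2[OF la] by simp
next
  assume "rep_typeII A B"
  then obtain l a where la: "0 < l" and c: "conj_pair A B (nf_inv_conj a) (nf_dil l)"
    unfolding rep_typeII_def by blast
  obtain b where T: "\<forall>w. I_word A B w = (if b then cnj (I_word (nf_inv_conj a) (nf_dil l) w) else I_word (nf_inv_conj a) (nf_dil l) w)"
    using I_transfer[OF c] by (auto simp: nf_dil_def)
  have 1: "I_word A B [Asq] = of_real ((2*cos a)^2 - 4)"
    using T I_ic by simp
  have 2: "I_word A B [Bgen] = of_real ((exp(l/2) + exp(-l/2))^2 - 4)"
    using T I_dil by simp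
  show "I_word A B [Asq] \<in> \<real>" using 1 by simp
  show "Re (I_word A B [Asq]) \<le> 0" using 1 ineq3 by simp
  show "I_word A B [Bgen] \<in> \<real>" using 2 by simp
  show "Re (I_word A B [Bgen]) > 0" using 2 ineq4[OF la] by simp
qed

end
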